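(* Let $k\ge 2$ be an odd integer which is not prime. Every $k$-$T_0T^\ast$-perfect number $n>1$ has the form $p_1^{2k-1}$ for a prime $p_1$, or the form $p_1^{(d-1)/2}\cdot p_2^{(k/d-1)/2}$ for distinct primes $p_1,p_2$, where $d$ is a positive divisor of $k$ satisfying $2<d<k$.
   Context: For a positive integer $m$, $T(m)$ denotes the product of all positive divisors of $m$, and $T^\ast(m)$ the product of all unitary divisors of $m$ (divisors $d$ with $\gcd(d,m/d)=1$). For an integer $K\ge 2$, an integer $n>1$ is called $K$-$T_0T^\ast$-perfect if $T(T^\ast(n))=n^K$. *)

theory Defs
  imports "HOL-Computational_Algebra.Primes"
begin

definition T :: "nat \<Rightarrow> nat" where
  "T m = (\<Prod>d\<in>{d. d dvd m}. d)"

definition Tstar :: "nat \<Rightarrow> nat" where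
  "Tstar m = (\<Prod>d\<in>{d. d dvd m \<and> coprime d (m div d)}. d)"

definition K_T0Tstar_perfect :: "nat \<Rightarrow> nat \<Rightarrow> bool" where
  "K_T0Tstar_perfect K n \<longleftrightarrow> 1 < n \<and> T (Tstar n) = n ^ K"

end

theory Submission imports Defs "HOL-Library.FuncSet" begin

lemma prod_sq_involution:
  fixes x :: nat
  assumes "x > 0" "finite S" "\<And>d. d \<in> S \<Longrightarrow> d dvd x" "\<And>d. d \<in> S \<Longrightarrow> x div d \<in> S"
  shows "(\<Prod>d\<in>S. d) ^ 2 = x ^ card S"
proof -
  have "(\<Prod>d\<in>S. d) = (\<Prod>d\<in>S. x div d)"
    by (rule prod.reindex_bij_witness[where i="\<lambda>d. x div d" and j="\<lambda>d. x div d"])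
       (use assms in \<open>auto simp: dvd_div_eq_mult div_div_eq_right\<close>)
  hence "(\<Prod>d\<in>S. d) ^ 2 = (\<Prod>d\<in>S. d) * (\<Prod>d\<in>S. x div d)"
    by (simp add: power2_eq_square)
  also have "\<dots> = (\<Prod>d\<in>S. d * (x div d))" by (simp add: prod.distrib)
  also have "\<dots> = (\<Prod>d\<in>S. x)" using assms(3) by (intro prod.cong) auto
  finally show ?thesis by simp
qed

lemma T_sq: "x > 0 \<Longrightarrow> T x ^ 2 = x ^ card {d. d dvd x}"
  unfolding T_def
  by (rule prod_sq_involution) (auto intro: dvd_div_eq_mult)

lemma Tstar_sq: "x > 0 \<Longrightarrow> Tstar x ^ 2 = x ^ card {d. d dvd x \<and> coprime d (x div d)}"
  unfolding Tstar_def
proof (rule prod_sq_involution)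
  assume x: "x > 0"
  show "finite {d. d dvd x \<and> coprime d (x div d)}"
    using x by (rule finite_subset[rotated, OF finite_divisors_nat[of x]]) auto
  fix d assume d: "d \<in> {d. d dvd x \<and> coprime d (x div d)}"
  then show "d dvd x" by auto
  have "x div (x div d) = d" using d x by (auto simp: div_div_eq_right)
  then show "x div d \<in> {d. d dvd x \<and> coprime d (x div d)}"
    using d by (auto simp: coprime_commute dvd_div_iff_mult intro: div_dvd_div)
qed

lemma unitary_mult:
  fixes x d p :: nat
  assumes x: "x > 0" and d: "d dvd x" "coprime d (x div d)" and p: "prime p"
  shows "multiplicity p d = (if p dvd d then multiplicity p x else 0)"
proof -
  have x': "x = d * (x div d)" using d by simp
  have nz: "d \<noteq> 0" "x div d \<noteq> 0" using x x' by (metis mult_0 mult_0_right neq0_conv)+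
  have m: "multiplicity p x = multiplicity p d + multiplicity p (x div d)"
    using prime_elem_multiplicity_mult_distrib[of p d "x div d"] nz p x' by (metis prime_imp_prime_elem)
  show ?thesis
  proof (cases "p dvd d")
    case True
    hence "\<not> p dvd (x div d)" using d(2) p
      by (meson coprime_common_divisor not_prime_unit)
    hence "multiplicity p (x div d) = 0" by (rule not_dvd_imp_multiplicity_0)
    with m True show ?thesis by simp
  next
    case False
    thus ?thesis by (simp add: not_dvd_imp_multiplicity_0)
  qed
qed

lemma card_unitary:
  fixes x :: nat
  assumes x: "x > 0"
  shows "card {d. d dvd x \<and> coprime d (x div d)} = 2 ^ card (prime_factors x)"
proof -
  let ?U = "{d. d dvd x \<and> coprime d (x div d)}"
  let ?P = "prime_factors x"
  have "bij_betw prime_factors ?U (Pow ?P)"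
  proof (rule bij_betwI[where g="\<lambda>S. \<Prod>p\<in>S. p ^ multiplicity p x"])
    show "prime_factors \<in> ?U \<rightarrow> Pow ?P"
      using x by (auto simp: prime_factors_dvd intro: dvd_trans)
    show "(\<lambda>S. \<Prod>p\<in>S. p ^ multiplicity p x) \<in> Pow ?P \<rightarrow> ?U"
    proof
      fix S assume S: "S \<in> Pow ?P"
      define d where "d = (\<Prod>p\<in>S. p ^ multiplicity p x)"
      have fin: "finite S" using S by (auto intro: finite_subset)
      have pr: "\<And>q. q \<in> S \<Longrightarrow> prime q" using S by auto
      have md: "\<And>q. prime q \<Longrightarrow> multiplicity q d = (if q \<in> S then multiplicity q x else 0)"
        unfolding d_def by (rule multiplicity_prod_prime_powers[OF fin pr])
      have d0: "d \<noteq> 0" unfolding d_def using pr by (auto intro!: prod_pos simp: prime_gt_0_nat)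
      have dd: "d dvd x" by (rule multiplicity_le_imp_dvd[OF d0]) (simp add: md)
      have "coprime d (x div d)"
      proof (rule ccontr)
        assume "\<not> coprime d (x div d)"
        hence "gcd d (x div d) \<noteq> 1" by (simp add: coprime_iff_gcd_eq_1)
        then obtain q where q0: "prime q" "q dvd gcd d (x div d)" using prime_factor_nat by blast
        hence q: "prime q" "q dvd d" "q dvd x div d" by auto
        have xe: "x = d * (x div d)" using dd by simp
        have e0: "x div d \<noteq> 0" using x xe by (metis mult_0_right neq0_conv)
        have "multiplicity q x = multiplicity q d + multiplicity q (x div d)"
          using prime_elem_multiplicity_mult_distrib[of q d "x div d"] d0 e0 q(1) xe
          by (metis prime_imp_prime_elem)
        moreover have "multiplicity q d > 0" using q d0 by (simp add: prime_multiplicity_gt_zero_iff)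
        moreover have "multiplicity q (x div d) > 0" using q e0 by (simp add: prime_multiplicity_gt_zero_iff)
        ultimately show False using md[OF q(1)] by (auto split: if_splits)
      qed
      with dd show "d \<in> ?U" by simp
    qed
    fix S assume S: "S \<in> Pow ?P"
    have fin: "finite S" using S by (auto intro: finite_subset)
    have pr: "\<And>q. q \<in> S \<Longrightarrow> prime q" using S by auto
    show "prime_factors (\<Prod>p\<in>S. p ^ multiplicity p x) = S"
    proof -
      have "\<And>q. q \<in> S \<Longrightarrow> multiplicity q x > 0" using S by (auto simp: prime_factors_multiplicity)
      thus ?thesis
        by (auto simp: prime_factors_multiplicity multiplicity_prod_prime_powers[OF fin pr] pr split: if_splits)
    qed
  next
    fix d assume d: "d \<in> ?U"
    have d0: "d > 0" using d x by (auto intro: Nat.gr0I)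
    show "(\<Prod>p\<in>prime_factors d. p ^ multiplicity p x) = d"
    proof (rule multiplicity_eq_nat)
      show "(\<Prod>p\<in>prime_factors d. p ^ multiplicity p x) > 0"
        by (auto intro!: prod_pos simp: prime_gt_0_nat in_prime_factors_imp_prime)
      show "d > 0" by fact
      fix p :: nat assume p: "prime p"
      show "multiplicity p (\<Prod>p\<in>prime_factors d. p ^ multiplicity p x) = multiplicity p d"
        using unitary_mult[OF x _ _ p, of d] d d0 p
          multiplicity_prod_prime_powers[OF finite_set_mset _ p, of "prime_factorization d" "\<lambda>p. multiplicity p x"]
        by (auto simp: in_prime_factors_iff)
    qed
  qed
  hence "card ?U = card (Pow ?P)" by (rule bij_betw_same_card)
  thus ?thesis by (simp add: card_Pow)
qed

lemma card_div_pp: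
  fixes p :: nat assumes p: "prime p"
  shows "card {d. d dvd p ^ a} = a + 1"
proof -
  have "{d. d dvd p ^ a} = (\<lambda>i. p ^ i) ` {..a}"
    using divides_primepow_nat[OF p] by auto
  moreover have "inj_on (\<lambda>i. p ^ i) {..a}"
    using prime_gt_1_nat[OF p] by (auto simp: inj_on_def)
  ultimately show ?thesis by (simp add: card_image)
qed

lemma mult_ppq:
  fixes p q :: nat assumes p: "prime p" and q: "prime q" and pq: "p \<noteq> q"
  shows "multiplicity p (p ^ i * q ^ j) = i"
proof -
  have "\<not> p dvd q ^ j"
    using p q pq by (metis prime_dvd_power_iff prime_gt_0_nat primes_dvd_imp_eq dvd_1_iff_1
        prime_nat_iff power_0 not_prime_1 prime_dvd_power)
  hence "multiplicity p (q ^ j) = 0" by (rule not_dvd_imp_multiplicity_0)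
  moreover have "multiplicity p (p ^ i * q ^ j) = multiplicity p (p ^ i) + multiplicity p (q ^ j)"
    using p q by (intro prime_elem_multiplicity_mult_distrib) (auto simp: prime_gt_0_nat)
  ultimately show ?thesis using p by (simp add: multiplicity_same_power)
qed

lemma card_div_ppq:
  fixes p q :: nat assumes p: "prime p" and q: "prime q" and pq: "p \<noteq> q"
  shows "card {d. d dvd p ^ a * q ^ b} = (a + 1) * (b + 1)"
proof -
  have "{d. d dvd p ^ a * q ^ b} = (\<lambda>(i,j). p ^ i * q ^ j) ` ({..a} \<times> {..b})"
  proof (rule set_eqI, rule iffI)
    fix d assume "d \<in> {d. d dvd p ^ a * q ^ b}"
    hence "d dvd p ^ a * q ^ b" by simp
    then obtain d1 d2 where "d = d1 * d2" "d1 dvd p ^ a" "d2 dvd q ^ b"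
      using division_decomp by blast
    then show "d \<in> (\<lambda>(i,j). p ^ i * q ^ j) ` ({..a} \<times> {..b})"
      using divides_primepow_nat[OF p] divides_primepow_nat[OF q] by fastforce
  next
    fix d assume "d \<in> (\<lambda>(i,j). p ^ i * q ^ j) ` ({..a} \<times> {..b})"
    then show "d \<in> {d. d dvd p ^ a * q ^ b}"
      by (auto intro!: mult_dvd_mono le_imp_power_dvd)
  qed
  moreover have "inj_on (\<lambda>(i,j). p ^ i * q ^ j) ({..a} \<times> {..b})"
  proof (rule inj_onI, clarsimp)
    fix i j i' j' assume e: "p ^ i * q ^ j = p ^ i' * q ^ j'"
    have "i = i'" using mult_ppq[OF p q pq, of i j] mult_ppq[OF p q pq, of i' j'] e by simp
    moreover have "j = j'" using mult_ppq[OF q p pq[symmetric], of j i] mult_ppq[OF q p pq[symmetric], of j' i'] e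
      by (simp add: mult.commute)
    ultimately show "i = i' \<and> j = j'" by simp
  qed
  ultimately show ?thesis by (simp add: card_image card_cartesian_product)
qed

theorem mainTheorem11:
  fixes k n :: nat
  assumes "k \<ge> 2" and "odd k" and "\<not> prime k"
    and "K_T0Tstar_perfect k n"
  shows "(\<exists>p1. prime p1 \<and> n = p1 ^ (2 * k - 1))
       \<or> (\<exists>p1 p2 d. prime p1 \<and> prime p2 \<and> p1 \<noteq> p2 \<and> d dvd k \<and> 2 < d \<and> d < k
            \<and> n = p1 ^ ((d - 1) div 2) * p2 ^ ((k div d - 1) div 2))"
proof -
  have n1: "n > 1" and Tm: "T (Tstar n) = n ^ k" using assms(4) by (auto simp: K_T0Tstar_perfect_def)
  have n0: "n > 0" using n1 by simp
  define m where "m = Tstar n"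
  define s where "s = card (prime_factors n)"
  define t where "t = card {d. d dvd m}"
  have msq: "m ^ 2 = n ^ (2 ^ s)"
    unfolding m_def s_def using Tstar_sq[OF n0] card_unitary[OF n0] by simp
  have m0: "m > 0" using msq n0 by (metis gr0I power_not_zero zero_power2 not_gr0)
  have "n ^ (4 * k) = (T m ^ 2) ^ 2" using Tm by (simp add: m_def power_mult[symmetric] mult.commute)
  also have "\<dots> = (m ^ 2) ^ t" using T_sq[OF m0] by (simp add: t_def power_mult[symmetric] mult.commute)
  also have "\<dots> = n ^ (2 ^ s * t)" by (simp add: msq power_mult)
  finally have e: "4 * k = 2 ^ s * t" using n1 by simp
  obtain p0 where p0: "prime p0" "p0 dvd n" using n1 prime_factor_nat[of n] by auto
  have fin: "finite (prime_factors n)" by simp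
  have "p0 \<in> prime_factors n" using p0 n0 by (simp add: prime_factors_dvd)
  hence s1: "s \<ge> 1" unfolding s_def using fin by (metis card_0_eq empty_iff less_one not_le)
  have s3: "s < 3"
  proof (rule ccontr)
    assume "\<not> s < 3"
    hence "s = 3 + (s - 3)" by simp
    hence "(2::nat) ^ s = 2 ^ 3 * 2 ^ (s - 3)" by (metis power_add)
    hence "(2::nat) ^ s = 8 * 2 ^ (s - 3)" by simp
    hence "4 * k = 4 * (2 * 2 ^ (s - 3) * t)" using e by simp
    hence "even k" by simp
    with assms(2) show False by simp
  qed
  have fac: "n = (\<Prod>p\<in>prime_factors n. p ^ multiplicity p n)" using prime_factorization_nat[OF n0] .
  show ?thesis
  proof (cases "s = 1")
    case True
    then obtain p where P: "prime_factors n = {p}" unfolding s_def by (meson card_1_singletonE)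
    define a where "a = multiplicity p n"
    have pp: "prime p" using P by auto
    have na: "n = p ^ a" using fac P a_def by simp
    have "m ^ 2 = n ^ 2" using msq True by simp
    hence "m = n" by (simp add: power2_eq_iff_nonneg)
    hence "t = a + 1" unfolding t_def using na card_div_pp[OF pp] by simp
    hence "4 * k = 2 * (a + 1)" using e True by simp
    hence "a = 2 * k - 1" by simp
    thus ?thesis using na pp by blast
  next
    case False
    hence "s = 2" using s1 s3 by simp
    then obtain p q where P: "prime_factors n = {p, q}" "p \<noteq> q" unfolding s_def by (meson card_2_iff)
    define a where "a = multiplicity p n"
    define b where "b = multiplicity q n"
    have pp: "prime p" "prime q" using P by auto
    have a0: "a > 0" "b > 0" using P unfolding a_def b_def by (auto simp: prime_factors_multiplicity)
    have na: "n = p ^ a * q ^ b" using fac P a_def b_def by simp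
    have "m ^ 2 = (n ^ 2) ^ 2" using msq \<open>s = 2\<close> by (simp add: power_mult[symmetric])
    hence "m = n ^ 2" by (metis power2_eq_iff_nonneg zero_le)
    hence "m = p ^ (2 * a) * q ^ (2 * b)" using na by (simp add: power_mult_distrib power_mult mult.commute)
    hence "t = (2 * a + 1) * (2 * b + 1)" unfolding t_def using card_div_ppq[OF pp P(2)] by simp
    hence k: "k = (2 * a + 1) * (2 * b + 1)" using e \<open>s = 2\<close> by simp
    define d where "d = 2 * a + 1"
    have kd: "k div d = 2 * b + 1" unfolding k d_def by (rule nonzero_mult_div_cancel_left) simp
    have "d dvd k" unfolding k d_def by (rule dvd_triv_left)
    moreover have "2 < d" "d < k" using k d_def a0 by auto
    moreover have "(d - 1) div 2 = a" "(k div d - 1) div 2 = b" using kd d_def by auto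
    ultimately show ?thesis using na pp P(2) by metis
  qed
qed
end
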